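(* Let $p$ be a prime, $q=p^r$, $m,n\ge1$, and $0\le l\le r-1$. Let $\mathscr{C}\subseteq\mathrm{GF}(q^m)^n$ be a scalable code, $\mathscr{B}$ a basis of $\mathrm{GF}(q^m)$ over $\mathrm{GF}(q)$ and $\mathscr{B}'=\{\beta_1,\ldots,\beta_m\}$ its dual basis. Then $\mathrm{Im}_{\mathscr{B}}(\mathscr{C})$ is self-orthogonal w.r.t. the Hermitian-type product $\tilde h_l(x,y)=\sum_{i=1}^{mn}x_iy_i^{p^l}$ on $\mathrm{GF}(q)^{mn}$ if and only if $$\Big(\sum_{i=1}^n x_iy_i^{p^lq^k}\Big)\Big(\sum_{j=1}^m\beta_j^{1+p^lq^k}\Big)=0$$ for all $x=(x_1,\ldots,x_n),y=(y_1,\ldots,y_n)\in\mathscr{C}$ and all $0\le k\le m-1$.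
   Context: $\mathrm{Tr}:\mathrm{GF}(q^m)\to\mathrm{GF}(q)$, $\mathrm{Tr}(a)=\sum_{i=0}^{m-1}a^{q^i}$. The dual basis of a basis $\{\gamma_1,\ldots,\gamma_m\}$ is the unique basis $\{\beta_1,\ldots,\beta_m\}$ with $\mathrm{Tr}(\gamma_i\beta_j)=\delta_{ij}$. A code $\mathscr{C}\subseteq\mathrm{GF}(q^m)^n$ is scalable if $x\in\mathscr{C}\Rightarrow\alpha x\in\mathscr{C}$ for all $\alpha\in\mathrm{GF}(q^m)$. $\mathrm{Im}_{\mathscr{B}}(\mathscr{C})=\{(\mathrm{Tr}(\beta_1x_1),\ldots,\mathrm{Tr}(\beta_1x_n),\ldots,\mathrm{Tr}(\beta_mx_1),\ldots,\mathrm{Tr}(\beta_mx_n)):x\in\mathscr{C}\}\subseteq\mathrm{GF}(q)^{mn}$. A code $D$ is self-orthogonal w.r.t. a form $g$ if $g(x,y)=0$ for all $x,y\in D$. *)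

theory Defs
  imports Main "HOL-Computational_Algebra.Primes"
begin

text \<open>The field GF(q^m) is modelled as a finite field type 'a with CARD('a) = q^m;
  its subfield GF(q) is the set of fixed points of x \<mapsto> x^q.
  Vectors in GF(q^m)^n are lists of length n.\<close>

definition subGF :: "nat \<Rightarrow> 'a::{field,finite} set" where
  "subGF q = {x. x ^ q = x}"

definition tr :: "nat \<Rightarrow> nat \<Rightarrow> 'a::{field,finite} \<Rightarrow> 'a" where
  "tr q m a = (\<Sum>i<m. a ^ (q ^ i))"

definition is_basis :: "nat \<Rightarrow> nat \<Rightarrow> (nat \<Rightarrow> 'a::{field,finite}) \<Rightarrow> bool" where
  "is_basis q m \<gamma> \<longleftrightarrow>
     (\<forall>a::'a. \<exists>!c. (\<forall>i<m. c i \<in> subGF q) \<and> (\<forall>i\<ge>m. c i = 0) \<and> a = (\<Sum>i<m. c i * \<gamma> i))"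

definition is_dual_basis :: "nat \<Rightarrow> nat \<Rightarrow> (nat \<Rightarrow> 'a::{field,finite}) \<Rightarrow> (nat \<Rightarrow> 'a) \<Rightarrow> bool" where
  "is_dual_basis q m \<gamma> \<beta> \<longleftrightarrow> is_basis q m \<beta> \<and>
     (\<forall>i<m. \<forall>j<m. tr q m (\<gamma> i * \<beta> j) = (if i = j then 1 else 0))"

definition scalable :: "'a::field list set \<Rightarrow> bool" where
  "scalable C \<longleftrightarrow> (\<forall>x\<in>C. \<forall>\<alpha>. map (\<lambda>t. \<alpha> * t) x \<in> C)"

definition imB :: "nat \<Rightarrow> nat \<Rightarrow> (nat \<Rightarrow> 'a::{field,finite}) \<Rightarrow> 'a list set \<Rightarrow> 'a list set" where
  "imB q m \<beta> C = (\<lambda>x. concat (map (\<lambda>j. map (\<lambda>xi. tr q m (\<beta> j * xi)) x) [0..<m])) ` C"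

definition herm_l :: "nat \<Rightarrow> 'a::field list \<Rightarrow> 'a list \<Rightarrow> 'a" where
  "herm_l e x y = sum_list (map2 (\<lambda>a b. a * b ^ e) x y)"

definition self_orthogonal :: "('a list \<Rightarrow> 'a list \<Rightarrow> 'a::field) \<Rightarrow> 'a list set \<Rightarrow> bool" where
  "self_orthogonal g D \<longleftrightarrow> (\<forall>x\<in>D. \<forall>y\<in>D. g x y = 0)"

end

theory Submission
  imports Defs "HOL-Computational_Algebra.Computational_Algebra"
begin

lemma ff_pow_card:
  fixes x :: "'a::{field,finite}"
  shows "x ^ card (UNIV :: 'a set) = x"
proof (cases "x = 0")
  case False
  have "x * (\<Prod>y\<in>UNIV-{0}. x * y) = x * x ^ (card (UNIV :: 'a set) - 1) * \<Prod>(UNIV-{0})"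
    by (simp add: prod.distrib mult_ac)
  also have "x * x ^ (card (UNIV :: 'a set) - 1) = x ^ Suc (card (UNIV :: 'a set) - 1)"
    by (subst power_Suc) auto
  also have "Suc (card (UNIV :: 'a set) - 1) = card (UNIV :: 'a set)"
    using finite_UNIV_card_ge_0[where ?'a = 'a] by simp
  also have "(\<Prod>y\<in>UNIV-{0}. x * y) = (\<Prod>y\<in>UNIV-{0}. y)"
    by (rule prod.reindex_bij_witness[of _ "\<lambda>y. y / x" "\<lambda>y. x * y"]) (use False in auto)
  finally show ?thesis
    by simp
qed (use finite_UNIV_card_ge_0[where ?'a = 'a] in auto)

lemma ff_pow_card_pow:
  fixes x :: "'a::{field,finite}"
  shows "x ^ (card (UNIV :: 'a set) ^ k) = x"
  by (induction k) (simp_all add: ff_pow_card power_mult mult.commute)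

lemma ff_of_nat_card:
  "of_nat (card (UNIV :: 'a::{field,finite} set)) = (0::'a)"
proof -
  have "(\<Sum>y\<in>(UNIV::'a set). y) = (\<Sum>y\<in>UNIV. y + 1)"
    by (rule sum.reindex_bij_witness[of _ "\<lambda>y. y + 1" "\<lambda>y. y - 1"]) auto
  also have "\<dots> = (\<Sum>y\<in>UNIV. y) + of_nat (card (UNIV :: 'a set))"
    by (simp add: sum.distrib)
  finally show ?thesis by simp
qed

lemma ff_CHAR:
  assumes "prime p" "card (UNIV :: 'a::{field,finite} set) = p ^ e" "e > 0"
  shows "CHAR('a) = p"
proof -
  have pc: "prime CHAR('a)"
    by (rule prime_CHAR_semidom) (rule finite_imp_CHAR_pos, simp)
  have "CHAR('a) dvd p ^ e"
    using ff_of_nat_card[where 'a='a] assms(2) of_nat_eq_0_iff_char_dvd by metis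
  then have "CHAR('a) dvd p" using pc prime_dvd_power by blast
  then show ?thesis using pc assms(1) primes_dvd_imp_eq by blast
qed


lemma ff_poly_zero:
  fixes c :: "nat \<Rightarrow> 'a::{field,finite}" and e :: "nat \<Rightarrow> nat"
  assumes inj: "inj_on e {..<m}" and lt: "\<forall>k<m. e k < card (UNIV :: 'a set)"
    and z: "\<forall>x. (\<Sum>k<m. c k * x ^ e k) = 0"
  shows "\<forall>k<m. c k = 0"
proof -
  define P where "P = (\<Sum>k<m. monom (c k) (e k))"
  have ev: "poly P x = 0" for x using z by (simp add: P_def poly_sum poly_monom)
  have P0: "P = 0"
  proof (rule ccontr)
    assume "P \<noteq> 0"
    then have "card {x. poly P x = 0} \<le> degree P" by (rule card_poly_roots_bound)
    moreover have "{x. poly P x = 0} = UNIV" using ev by auto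
    moreover have "degree P < card (UNIV :: 'a set)"
    proof -
      have "degree P \<le> card (UNIV :: 'a set) - 1"
      proof (rule degree_le, intro allI impI)
        fix i assume "card (UNIV :: 'a set) - 1 < i"
        then have "\<forall>k<m. e k \<noteq> i" using lt by fastforce
        then show "coeff P i = 0" by (simp add: P_def coeff_sum)
      qed
      then show ?thesis using finite_UNIV_card_ge_0[where ?'a = 'a] by simp
    qed
    ultimately show False by simp
  qed
  show ?thesis
  proof (intro allI impI)
    fix k assume k: "k < m"
    have "coeff P (e k) = (\<Sum>j<m. if j = k then c j else 0)"
      unfolding P_def coeff_sum coeff_monom
      by (rule sum.cong) (use inj k in \<open>auto dest: inj_onD\<close>)
    also have "\<dots> = c k" using k by simp
    finally show "c k = 0" using P0 by simp
  qed
qed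

context
  fixes p r m q :: nat
  assumes pp: "prime p" and qdef: "q = p ^ r" and r1: "r \<ge> 1" and m1: "m \<ge> 1"
    and card: "card (UNIV :: 'a::{field,finite} set) = q ^ m"
begin

lemma CHAR_p: "CHAR('a) = p"
  using ff_CHAR[OF pp, of "r*m"] card qdef r1 m1 by (simp add: power_mult)

lemma frob_sum: "sum (f :: 'b \<Rightarrow> 'a) A ^ (p ^ k) = (\<Sum>i\<in>A. f i ^ (p ^ k))"
  by (rule freshmans_dream_sum') (simp_all add: CHAR_p pp)

lemma frob_sum_q: "sum (f :: 'b \<Rightarrow> 'a) A ^ (q ^ k) = (\<Sum>i\<in>A. f i ^ (q ^ k))"
  using frob_sum[of f A "r*k"] by (simp add: qdef power_mult)

lemma pow_qm: "(x::'a) ^ (q ^ m) = x"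
  using ff_pow_card[of x] card by simp

lemma tr_sum: "tr q m (sum (f :: 'b \<Rightarrow> 'a) A) = (\<Sum>a\<in>A. tr q m (f a))"
  unfolding tr_def frob_sum_q by (rule sum.swap)

lemma subGF_pow: "w \<in> subGF q \<Longrightarrow> (w::'a) ^ (q ^ i) = w"
proof (induction i)
  case (Suc i)
  then have "w ^ q = w" by (simp add: subGF_def)
  then show ?case using Suc by (simp add: power_mult mult.commute)
qed simp

lemma tr_scal: "w \<in> subGF q \<Longrightarrow> tr q m (w * (a::'a)) = w * tr q m a"
  unfolding tr_def by (simp add: power_mult_distrib subGF_pow sum_distrib_left)

lemma tr_pow_l: "(tr q m (a::'a)) ^ (p ^ l) = (\<Sum>k<m. a ^ (p ^ l * q ^ k))"
  unfolding tr_def frob_sum by (simp add: power_mult[symmetric] mult.commute)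

lemma tr_q: "(tr q m (a::'a)) ^ q = tr q m a"
proof -
  have "(tr q m a) ^ q = (\<Sum>i<m. a ^ (q ^ Suc i))"
    using frob_sum_q[of "\<lambda>i. a ^ (q ^ i)" "{..<m}" 1] unfolding tr_def
    by (simp add: power_mult[symmetric] mult.commute)
  also have "\<dots> = tr q m a"
  proof -
    have "(\<Sum>i<Suc m. a ^ (q ^ i)) = a ^ (q ^ 0) + (\<Sum>i<m. a ^ (q ^ Suc i))"
      by (rule sum.lessThan_Suc_shift)
    moreover have "(\<Sum>i<Suc m. a ^ (q ^ i)) = (\<Sum>i<m. a ^ (q ^ i)) + a ^ (q ^ m)"
      by simp
    ultimately show ?thesis unfolding tr_def using pow_qm[of a] by (simp add: add.commute)
  qed
  finally show ?thesis .
qed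

lemma tr_pow_subGF: "(tr q m (a::'a)) ^ (p ^ l) \<in> subGF q"
proof -
  have "((tr q m a)^(p^l))^q = ((tr q m a)^q)^(p^l)"
    by (simp add: power_mult[symmetric] mult.commute)
  then show ?thesis by (simp add: subGF_def tr_q)
qed

lemma q2: "q \<ge> 2"
proof -
  have p2: "p \<ge> 2" using pp by (rule prime_ge_2_nat)
  have "p ^ 1 \<le> p ^ r" using r1 p2 by (intro power_increasing) auto
  then show ?thesis using p2 qdef by simp
qed

lemma tr_exists: "\<exists>a::'a. tr q m a \<noteq> 0"
proof (rule ccontr)
  assume "\<not> ?thesis"
  then have "\<forall>x::'a. (\<Sum>k<m. 1 * x ^ (q ^ k)) = 0" by (simp add: tr_def)
  moreover have "inj_on (\<lambda>k. q ^ k) {..<m}" using q2 by (simp add: inj_on_def power_inject_exp)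
  moreover have "\<forall>k<m. q ^ k < card (UNIV :: 'a set)" using q2 card
    by (auto intro: power_strict_increasing)
  ultimately have "\<forall>k<m. (1::'a) = 0" using ff_poly_zero[of "\<lambda>k. q ^ k" m "\<lambda>_. 1"] by simp
  then show False using m1 by auto
qed

lemma tr_nondeg: "(\<forall>\<alpha>. tr q m (\<alpha> * c) = 0) \<Longrightarrow> (c::'a) = 0"
proof (rule ccontr)
  assume h: "\<forall>\<alpha>. tr q m (\<alpha> * c) = 0" and c: "c \<noteq> 0"
  obtain a :: 'a where a: "tr q m a \<noteq> 0" using tr_exists by blast
  have "tr q m ((a / c) * c) = 0" using h[rule_format, of "a / c"] .
  then show False using a c by simp
qed

end


lemma herm_append:
  "length u1 = length w1 \<Longrightarrow> herm_l e (u1 @ u2) (w1 @ w2) = herm_l e u1 w1 + herm_l e u2 w2"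
  by (simp add: herm_l_def zip_append)

lemma herm_map:
  assumes "length x = n" "length y = n"
  shows "herm_l e (map g x) (map h y) = (\<Sum>i<n. g (x ! i) * (h (y ! i)) ^ e)"
proof -
  have "herm_l e (map g x) (map h y) = (\<Sum>i = 0..<n. g (x ! i) * (h (y ! i)) ^ e)"
    unfolding herm_l_def using assms by (simp add: sum_list_sum_nth)
  then show ?thesis by (simp add: atLeast0LessThan)
qed

lemma herm_concat:
  assumes "length x = n" "length y = n"
  shows "herm_l e (concat (map (\<lambda>j. map (g j) x) J)) (concat (map (\<lambda>j. map (h j) y) J))
    = (\<Sum>j\<leftarrow>J. \<Sum>i<n. g j (x ! i) * (h j (y ! i)) ^ e)"
proof (induction J)
  case Nil
  then show ?case by (simp add: herm_l_def)
next
  case (Cons a J)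
  then show ?case using assms by (simp add: herm_append herm_map)
qed

context
  fixes p r m q :: nat
  assumes pp: "prime p" and qdef: "q = p ^ r" and r1: "r \<ge> 1" and m1: "m \<ge> 1"
    and card: "card (UNIV :: 'a::{field,finite} set) = q ^ m"
begin

lemma key:
  fixes x y :: "'a list" and \<beta> :: "nat \<Rightarrow> 'a"
  assumes "length x = n" "length y = n"
  shows "herm_l (p ^ l) (concat (map (\<lambda>j. map (\<lambda>xi. tr q m (\<beta> j * xi)) x) [0..<m]))
      (concat (map (\<lambda>j. map (\<lambda>xi. tr q m (\<beta> j * xi)) y) [0..<m]))
    = tr q m (\<Sum>k<m. (\<Sum>i<n. x ! i * (y ! i) ^ (p ^ l * q ^ k)) * (\<Sum>j<m. \<beta> j ^ (1 + p ^ l * q ^ k)))"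
proof -
  let ?e = "\<lambda>k. p ^ l * q ^ k"
  have "herm_l (p ^ l) (concat (map (\<lambda>j. map (\<lambda>xi. tr q m (\<beta> j * xi)) x) [0..<m]))
      (concat (map (\<lambda>j. map (\<lambda>xi. tr q m (\<beta> j * xi)) y) [0..<m]))
    = (\<Sum>j<m. \<Sum>i<n. tr q m (\<beta> j * x ! i) * (tr q m (\<beta> j * y ! i)) ^ (p ^ l))"
    unfolding herm_concat[OF assms]
    by (simp add: sum.distinct_set_conv_list[symmetric] atLeast0LessThan)
  also have "\<dots> = (\<Sum>j<m. \<Sum>i<n. tr q m ((tr q m (\<beta> j * y ! i)) ^ (p ^ l) * (\<beta> j * x ! i)))"
    by (intro sum.cong refl, subst tr_scal[OF pp qdef r1 m1 card tr_pow_subGF[OF pp qdef r1 m1 card]])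
      (simp add: mult.commute)
  also have "\<dots> = tr q m (\<Sum>j<m. \<Sum>i<n. (tr q m (\<beta> j * y ! i)) ^ (p ^ l) * (\<beta> j * x ! i))"
    by (simp add: tr_sum[OF pp qdef r1 m1 card])
  also have "(\<Sum>j<m. \<Sum>i<n. (tr q m (\<beta> j * y ! i)) ^ (p ^ l) * (\<beta> j * x ! i))
      = (\<Sum>j<m. \<Sum>i<n. \<Sum>k<m. x ! i * (y ! i) ^ ?e k * \<beta> j ^ (1 + ?e k))"
    by (simp add: tr_pow_l[OF pp qdef r1 m1 card] sum_distrib_left sum_distrib_right power_mult_distrib power_add mult_ac)
  also have "\<dots> = (\<Sum>k<m. \<Sum>i<n. \<Sum>j<m. x ! i * (y ! i) ^ ?e k * \<beta> j ^ (1 + ?e k))"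
  proof -
    have "(\<Sum>j<m. \<Sum>i<n. \<Sum>k<m. x ! i * (y ! i) ^ ?e k * \<beta> j ^ (1 + ?e k))
      = (\<Sum>j<m. \<Sum>k<m. \<Sum>i<n. x ! i * (y ! i) ^ ?e k * \<beta> j ^ (1 + ?e k))"
      by (rule sum.cong[OF refl], rule sum.swap)
    also have "\<dots> = (\<Sum>k<m. \<Sum>j<m. \<Sum>i<n. x ! i * (y ! i) ^ ?e k * \<beta> j ^ (1 + ?e k))"
      by (rule sum.swap)
    also have "\<dots> = (\<Sum>k<m. \<Sum>i<n. \<Sum>j<m. x ! i * (y ! i) ^ ?e k * \<beta> j ^ (1 + ?e k))"
      by (rule sum.cong[OF refl], rule sum.swap)
    finally show ?thesis .
  qed
  also have "\<dots> = (\<Sum>k<m. (\<Sum>i<n. x ! i * (y ! i) ^ ?e k) * (\<Sum>j<m. \<beta> j ^ (1 + ?e k)))"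
    by (intro sum.cong refl) (simp add: sum_product)
  finally show ?thesis .
qed

end


lemma scale_sum:
  fixes x y :: "'a::field list"
  assumes "length x = n" "length y = n"
  shows "(\<Sum>i<n. map (\<lambda>t. \<alpha> * t) x ! i * (map (\<lambda>t. \<alpha>' * t) y ! i) ^ e)
       = \<alpha> * \<alpha>' ^ e * (\<Sum>i<n. x ! i * (y ! i) ^ e)"
  unfolding sum_distrib_left
  by (rule sum.cong) (use assms in \<open>auto simp: power_mult_distrib mult_ac\<close>)

theorem theorem6:
  fixes p r m n l q :: nat
    and C :: "('a::{field,finite}) list set"
    and \<gamma> \<beta> :: "nat \<Rightarrow> 'a"
  assumes "prime p" and "q = p ^ r" and "m \<ge> 1" and "n \<ge> 1" and "l \<le> r - 1" and "r \<ge> 1"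
    and "card (UNIV :: 'a set) = q ^ m"
    and "C \<subseteq> {x. length x = n}"
    and "scalable C"
    and "is_basis q m \<gamma>"
    and "is_dual_basis q m \<gamma> \<beta>"
  shows "self_orthogonal (herm_l (p ^ l)) (imB q m \<beta> C) \<longleftrightarrow>
    (\<forall>x\<in>C. \<forall>y\<in>C. \<forall>k<m.
       (\<Sum>i<n. x ! i * (y ! i) ^ (p ^ l * q ^ k)) * (\<Sum>j<m. \<beta> j ^ (1 + p ^ l * q ^ k)) = 0)"
proof -
  note pp = assms(1) and qdef = assms(2) and m1 = assms(3) and r1 = assms(6) and card = assms(7)
  define v where "v = (\<lambda>x. concat (map (\<lambda>j. map (\<lambda>xi. tr q m (\<beta> j * xi)) x) [0..<m]))"
  define e where "e = (\<lambda>k. p ^ l * q ^ k)"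
  define A where "A = (\<lambda>x y k. (\<Sum>i<n. x ! i * (y ! i) ^ e k) * (\<Sum>j<m. \<beta> j ^ (1 + e k)))"
  have im: "imB q m \<beta> C = v ` C" unfolding imB_def v_def ..
  have K: "herm_l (p ^ l) (v x) (v y) = tr q m (\<Sum>k<m. A x y k)"
    if "length x = n" "length y = n" for x y
    unfolding v_def A_def e_def by (rule key[OF pp qdef r1 m1 card that])
  have len: "length x = n" if "x \<in> C" for x using assms(8) that by auto
  have sc: "map (\<lambda>t. \<alpha> * t) x \<in> C" if "x \<in> C" for x \<alpha>
    using assms(9) that unfolding scalable_def by blast
  have q2: "q \<ge> 2" by (rule q2[OF pp qdef r1 m1 card])
  have inj: "inj_on e {..<m}"
    unfolding e_def inj_on_def using q2 prime_gt_0_nat[OF pp] by (simp add: power_inject_exp)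
  have bnd: "\<forall>k<m. e k < card (UNIV :: 'a set)"
  proof (intro allI impI)
    fix k assume k: "k < m"
    have p2: "p \<ge> 2" using pp by (rule prime_ge_2_nat)
    have "l < r" using assms(5) r1 by linarith
    then have "p ^ l < p ^ r" using p2 by (intro power_strict_increasing) auto
    then have pl: "p ^ l < q" using qdef by simp
    have "q ^ k \<le> q ^ (m - 1)" using k q2 by (intro power_increasing) auto
    then have "p ^ l * q ^ k < q * q ^ (m - 1)"
      using pl q2 by (intro mult_less_le_imp_less) auto
    also have "q * q ^ (m - 1) = q ^ m" using m1 by (metis Suc_diff_1 less_le_trans zero_less_one power_Suc)
    finally show "e k < card (UNIV :: 'a set)" using card e_def by simp
  qed
  show ?thesis
  proof
    assume so: "self_orthogonal (herm_l (p ^ l)) (imB q m \<beta> C)"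
    show "\<forall>x\<in>C. \<forall>y\<in>C. \<forall>k<m.
       (\<Sum>i<n. x ! i * (y ! i) ^ (p ^ l * q ^ k)) * (\<Sum>j<m. \<beta> j ^ (1 + p ^ l * q ^ k)) = 0"
    proof (intro ballI allI impI)
      fix x y k assume x: "x \<in> C" and y: "y \<in> C" and k: "k < m"
      have z: "(\<Sum>k<m. A x y k * \<alpha>' ^ e k) = 0" for \<alpha>'
      proof (rule tr_nondeg[OF pp qdef r1 m1 card], rule allI)
        fix \<alpha>
        let ?x = "map (\<lambda>t. \<alpha> * t) x" and ?y = "map (\<lambda>t. \<alpha>' * t) y"
        have "herm_l (p ^ l) (v ?x) (v ?y) = 0"
          using so sc[OF x] sc[OF y] unfolding self_orthogonal_def im by blast
        moreover have "herm_l (p ^ l) (v ?x) (v ?y) = tr q m (\<Sum>k<m. A ?x ?y k)"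
          by (rule K) (simp_all add: len x y)
        moreover have "(\<Sum>k<m. A ?x ?y k) = (\<Sum>k<m. \<alpha> * (A x y k * \<alpha>' ^ e k))"
          unfolding A_def scale_sum[OF len[OF x] len[OF y]] by (rule sum.cong[OF refl]) (simp add: mult_ac)
        moreover have "(\<Sum>k<m. \<alpha> * (A x y k * \<alpha>' ^ e k)) = \<alpha> * (\<Sum>k<m. A x y k * \<alpha>' ^ e k)"
          by (simp add: sum_distrib_left)
        ultimately show "tr q m (\<alpha> * (\<Sum>k<m. A x y k * \<alpha>' ^ e k)) = 0" by simp
      qed
      have "\<forall>k<m. A x y k = 0"
        by (rule ff_poly_zero[OF inj bnd]) (use z in simp)
      then show "(\<Sum>i<n. x ! i * (y ! i) ^ (p ^ l * q ^ k)) * (\<Sum>j<m. \<beta> j ^ (1 + p ^ l * q ^ k)) = 0"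
        using k unfolding A_def e_def by blast
    qed
  next
    assume h: "\<forall>x\<in>C. \<forall>y\<in>C. \<forall>k<m.
       (\<Sum>i<n. x ! i * (y ! i) ^ (p ^ l * q ^ k)) * (\<Sum>j<m. \<beta> j ^ (1 + p ^ l * q ^ k)) = 0"
    show "self_orthogonal (herm_l (p ^ l)) (imB q m \<beta> C)"
      unfolding self_orthogonal_def im
    proof (intro ballI)
      fix a b assume "a \<in> v ` C" "b \<in> v ` C"
      then obtain x y where x: "x \<in> C" and y: "y \<in> C" and ab: "a = v x" "b = v y" by blast
      have "(\<Sum>k<m. A x y k) = 0"
        by (rule sum.neutral) (use h x y in \<open>simp add: A_def e_def\<close>)
      then have "herm_l (p ^ l) a b = tr q m 0" using K[OF len[OF x] len[OF y]] ab by simp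
      also have "tr q m (0::'a) = 0" unfolding tr_def
        by (rule sum.neutral) (use q2 in \<open>auto intro!: zero_power\<close>)
      finally show "herm_l (p ^ l) a b = 0" .
    qed
  qed
qed

end
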